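(* Let $(A_j)_{j\ge1}$ be a sequence of nonempty subsets of $\mathbb{Z}$ such that there is a positive integer $q$ with $A_j\subset A_{j+q}$ for all $j$, and such that $\sup_j|A_j|<\infty$. If there exists a sequence $(U_j)_{j\ge1}$ of subsets of $\mathbb{Z}$ with $A_j+U_j=A_{j+q}$ for all $j$, then $(A_j)_{j\ge1}$ is strongly eventually periodic.
   Context: For $B,C\subset\mathbb{Z}$, $B+C=\{b+c:b\in B,c\in C\}$. A sequence $(A_j)_{j\ge1}$ of nonempty subsets of $\mathbb{Z}$ is strongly eventually periodic (SEP) if there exist a positive integer $p$ and finite sequences of sets $(B_\ell)_{\ell=1}^p$, $(C_\ell)_{\ell=1}^p$ such that $(A_j)$ equals $B_1,\ldots,B_p$ followed by the infinite repetition of $B_1+C_1,\ldots,B_p+C_p$. *)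

theory Defs
  imports Main
begin

definition sumset :: "int set \<Rightarrow> int set \<Rightarrow> int set" where
  "sumset B C = {x. \<exists>b\<in>B. \<exists>c\<in>C. x = b + c}"

text \<open>Sequences (A_j) for j >= 1 are modelled as functions nat => int set; only indices j >= 1
  matter.\<close>
definition SEP :: "(nat \<Rightarrow> int set) \<Rightarrow> bool" where
  "SEP A \<longleftrightarrow> (\<exists>p::nat. p > 0 \<and> (\<exists>B C :: nat \<Rightarrow> int set.
      (\<forall>l\<in>{1..p}. A l = B l) \<and>
      (\<forall>k::nat. \<forall>l\<in>{1..p}. A (p + k * p + l) = sumset (B l) (C l))))"

end

theory Submission
  imports Defs
begin

lemma sumset_assoc: "sumset (sumset X Y) Z = sumset X (sumset Y Z)"
  unfolding sumset_def by (auto, metis add.assoc, metis add.assoc)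

fun V :: "(nat \<Rightarrow> int set) \<Rightarrow> nat \<Rightarrow> nat \<Rightarrow> nat \<Rightarrow> int set" where
  "V U q l 0 = {0}"
| "V U q l (Suc m) = sumset (V U q l m) (U (l + m * q))"

lemma sumset_zero: "sumset X {0} = X"
  unfolding sumset_def by auto

lemma V_prop:
  assumes "\<forall>j\<ge>1. sumset (A j) (U j) = A (j + q)" "l \<ge> 1"
  shows "A (l + m * q) = sumset (A l) (V U q l m)"
proof (induction m)
  case 0 then show ?case by (simp add: sumset_zero)
next
  case (Suc m)
  have "A (l + Suc m * q) = sumset (A (l + m*q)) (U (l + m*q))"
    using assms by (metis add.commute add.left_commute le_add1 mult_Suc order_trans)
  also have "\<dots> = sumset (A l) (V U q l (Suc m))" using Suc by (simp add: sumset_assoc)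
  finally show ?case .
qed

lemma chain_mono:
  fixes m m' q :: nat
  assumes "\<forall>j\<ge>1. A j \<subseteq> A (j + q)" "j \<ge> 1" "m \<le> m'"
  shows "A (j + m*q) \<subseteq> A (j + m'*q)"
  using assms(3)
proof (induction m' rule: dec_induct)
  case base then show ?case by simp
next
  case (step n)
  have "A (j + n*q) \<subseteq> A (j + n*q + q)" using assms(1,2) by simp
  moreover have "j + n*q + q = j + Suc n * q" by simp
  ultimately show ?case using step by (metis order_trans)
qed

lemma stab:
  fixes q :: nat
  assumes incl: "\<forall>j\<ge>1. A j \<subseteq> A (j + q)" and bd: "\<forall>j\<ge>1. finite (A j) \<and> card (A j) \<le> M"
    and "j \<ge> 1"
  shows "\<exists>m0. \<forall>m\<ge>m0. A (j + m*q) = A (j + m0*q)"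
proof -
  let ?S = "(\<lambda>m. card (A (j + m*q))) ` UNIV"
  have fin: "finite ?S"
  proof (rule finite_subset[of _ "{..M}"])
    show "?S \<subseteq> {..M}" using bd assms(3) by (auto intro: order_trans)
  qed simp
  have "Max ?S \<in> ?S" using fin by (intro Max_in) auto
  then obtain m0 where m0: "card (A (j + m0*q)) = Max ?S" by auto
  show ?thesis
  proof (intro exI allI impI)
    fix m assume "m0 \<le> m"
    then have sub: "A (j + m0*q) \<subseteq> A (j + m*q)" using chain_mono[OF incl assms(3)] by blast
    have "card (A (j + m*q)) \<le> card (A (j + m0*q))" using m0 fin by simp
    moreover have "finite (A (j + m*q))" using bd assms(3) by simp
    ultimately show "A (j + m*q) = A (j + m0*q)"
      using sub by (metis card_seteq)
  qed
qed

theorem lemma5p10: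
  fixes A :: "nat \<Rightarrow> int set" and q :: nat
  assumes nonempty: "\<forall>j\<ge>1. A j \<noteq> {}"
    and q_pos: "q > 0"
    and incl: "\<forall>j\<ge>1. A j \<subseteq> A (j + q)"
    and bounded: "\<exists>M::nat. \<forall>j\<ge>1. finite (A j) \<and> card (A j) \<le> M"
    and U: "\<exists>U :: nat \<Rightarrow> int set. \<forall>j\<ge>1. sumset (A j) (U j) = A (j + q)"
  shows "SEP A"
proof -
  obtain M where bd: "\<forall>j\<ge>1. finite (A j) \<and> card (A j) \<le> M" using bounded by blast
  obtain U where hU: "\<forall>j\<ge>1. sumset (A j) (U j) = A (j + q)" using U by blast
  have "\<forall>j. \<exists>m0. j \<ge> 1 \<longrightarrow> (\<forall>m\<ge>m0. A (j + m*q) = A (j + m0*q))"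
    using stab[OF incl bd] by blast
  then obtain mm where mm: "\<And>j m. j \<ge> 1 \<Longrightarrow> m \<ge> mm j \<Longrightarrow> A (j + m*q) = A (j + mm j*q)"
    by metis
  define K where "K = Max (mm ` {1..q})"
  have key: "A (l + n*q) = A (l + K*q)" if "l \<ge> 1" "n \<ge> K" for l n
  proof -
    define j where "j = (l - 1) mod q + 1"
    define t where "t = (l - 1) div q"
    have lj: "l = j + t*q" unfolding j_def t_def using that(1)
      by (metis add.commute add.left_commute div_mult_mod_eq le_add_diff_inverse2)
    have j1: "j \<ge> 1" "j \<in> {1..q}" unfolding j_def using q_pos
      by (auto simp: Suc_le_eq)
    have "mm j \<le> K" unfolding K_def using j1 by (intro Max_ge) auto
    then have "A (j + (t+n)*q) = A (j + mm j*q)" "A (j + (t+K)*q) = A (j + mm j*q)"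
      using mm[OF j1(1), of "t+n"] mm[OF j1(1), of "t+K"] that(2) \<open>mm j \<le> K\<close> by linarith+
    then show ?thesis using lj by (simp add: algebra_simps)
  qed
  define p where "p = K*q + q"
  have ppos: "p > 0" using q_pos p_def by simp
  show ?thesis unfolding SEP_def
  proof (intro exI conjI ballI allI)
    show "p > 0" by (rule ppos)
    fix l assume "l \<in> {1..p}" then show "A l = A l" by simp
  next
    fix k l assume l: "l \<in> {1..p}"
    then have l1: "l \<ge> 1" by simp
    have "A (p + k*p + l) = A (l + ((K+1)*(k+1))*q)" unfolding p_def by (simp add: algebra_simps)
    also have "\<dots> = A (l + K*q)" by (rule key[OF l1]) simp
    also have "\<dots> = A (l + (K+1)*q)" by (rule key[OF l1, symmetric]) simp
    also have "\<dots> = sumset (A l) (V U q l (K+1))" by (rule V_prop[OF hU l1])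
    finally show "A (p + k*p + l) = sumset (A l) (V U q l (K+1))" .
  qed
qed

end
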